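(* Let $n\ge 2$ and $P,Q\in\Gamma_n$. Then \[ D_{I\Delta}\le \tfrac23 D_{h\Delta}\le 2D_{hI}\le D_{TJ}, \] \[ D_{I\Delta}\le \tfrac23 D_{h\Delta}\le \tfrac12 D_{J\Delta}\le \tfrac13 D_{T\Delta}\le D_{TJ}, \] and \[ D_{TJ}\le \tfrac23 D_{Th}\le 2D_{Jh}\le \tfrac16 D_{\Psi\Delta}\le \tfrac15 D_{\Psi I}\le \tfrac29 D_{\Psi h}\le \tfrac14 D_{\Psi J}\le \tfrac13 D_{\Psi T}, \] where all quantities are evaluated at $(P\|Q)$.
   Context: $\Gamma_n=\{P=(p_1,\dots,p_n): p_i>0,\ \sum_{i=1}^n p_i=1\}$. For $P,Q\in\Gamma_n$: $h(P\|Q)=\frac12\sum_{i=1}^n(\sqrt{p_i}-\sqrt{q_i})^2$; $\Delta(P\|Q)=\sum_{i=1}^n\frac{(p_i-q_i)^2}{p_i+q_i}$; $\Psi(P\|Q)=\sum_{i=1}^n\frac{(p_i-q_i)^2(p_i+q_i)}{p_iq_i}$; $J(P\|Q)=\sum_{i=1}^n(p_i-q_i)\ln\frac{p_i}{q_i}$; $I(P\|Q)=\frac12\Big[\sum_{i=1}^n p_i\ln\frac{2p_i}{p_i+q_i}+\sum_{i=1}^n q_i\ln\frac{2q_i}{p_i+q_i}\Big]$; $T(P\|Q)=\sum_{i=1}^n\frac{p_i+q_i}{2}\ln\frac{p_i+q_i}{2\sqrt{p_iq_i}}$. Differences: $D_{\Psi T}=\frac1{16}\Psi-T$, $D_{\Psi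 J}=\frac1{16}\Psi-\frac18J$, $D_{\Psi h}=\frac1{16}\Psi-h$, $D_{\Psi I}=\frac1{16}\Psi-I$, $D_{\Psi\Delta}=\frac1{16}\Psi-\frac14\Delta$, $D_{TJ}=T-\frac18J$, $D_{Th}=T-h$, $D_{T\Delta}=T-\frac14\Delta$, $D_{Jh}=\frac18J-h$, $D_{J\Delta}=\frac18J-\frac14\Delta$, $D_{hI}=h-I$, $D_{h\Delta}=h-\frac14\Delta$, $D_{I\Delta}=I-\frac14\Delta$ (all evaluated at $(P\|Q)$). *)

theory Defs
  imports Complex_Main
begin

text \<open>Probability distributions of length n are represented as functions
  nat => real, with components indexed by 0..n-1.\<close>

definition Gamma :: "nat \<Rightarrow> (nat \<Rightarrow> real) set" where
  "Gamma n = {P. (\<forall>i<n. P i > 0) \<and> (\<Sum>i<n. P i) = 1}"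

definition hell :: "nat \<Rightarrow> (nat \<Rightarrow> real) \<Rightarrow> (nat \<Rightarrow> real) \<Rightarrow> real" where
  "hell n P Q = 1/2 * (\<Sum>i<n. (sqrt (P i) - sqrt (Q i))^2)"

definition Delta :: "nat \<Rightarrow> (nat \<Rightarrow> real) \<Rightarrow> (nat \<Rightarrow> real) \<Rightarrow> real" where
  "Delta n P Q = (\<Sum>i<n. (P i - Q i)^2 / (P i + Q i))"

definition Psi :: "nat \<Rightarrow> (nat \<Rightarrow> real) \<Rightarrow> (nat \<Rightarrow> real) \<Rightarrow> real" where
  "Psi n P Q = (\<Sum>i<n. (P i - Q i)^2 * (P i + Q i) / (P i * Q i))"

definition Jdiv :: "nat \<Rightarrow> (nat \<Rightarrow> real) \<Rightarrow> (nat \<Rightarrow> real) \<Rightarrow> real" where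
  "Jdiv n P Q = (\<Sum>i<n. (P i - Q i) * ln (P i / Q i))"

definition Idiv :: "nat \<Rightarrow> (nat \<Rightarrow> real) \<Rightarrow> (nat \<Rightarrow> real) \<Rightarrow> real" where
  "Idiv n P Q = 1/2 * ((\<Sum>i<n. P i * ln (2 * P i / (P i + Q i)))
                     + (\<Sum>i<n. Q i * ln (2 * Q i / (P i + Q i))))"

definition Tdiv :: "nat \<Rightarrow> (nat \<Rightarrow> real) \<Rightarrow> (nat \<Rightarrow> real) \<Rightarrow> real" where
  "Tdiv n P Q = (\<Sum>i<n. (P i + Q i) / 2 * ln ((P i + Q i) / (2 * sqrt (P i * Q i))))"

definition "D_PsiT n P Q = Psi n P Q / 16 - Tdiv n P Q"
definition "D_PsiJ n P Q = Psi n P Q / 16 - Jdiv n P Q / 8"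
definition "D_Psih n P Q = Psi n P Q / 16 - hell n P Q"
definition "D_PsiI n P Q = Psi n P Q / 16 - Idiv n P Q"
definition "D_PsiDelta n P Q = Psi n P Q / 16 - Delta n P Q / 4"
definition "D_TJ n P Q = Tdiv n P Q - Jdiv n P Q / 8"
definition "D_Th n P Q = Tdiv n P Q - hell n P Q"
definition "D_TDelta n P Q = Tdiv n P Q - Delta n P Q / 4"
definition "D_Jh n P Q = Jdiv n P Q / 8 - hell n P Q"
definition "D_JDelta n P Q = Jdiv n P Q / 8 - Delta n P Q / 4"
definition "D_hI n P Q = hell n P Q - Idiv n P Q"
definition "D_hDelta n P Q = hell n P Q - Delta n P Q / 4"
definition "D_IDelta n P Q = Idiv n P Q - Delta n P Q / 4"

end

theory Submission imports Defs begin

definition "fh (t::real) = (t - 2 * sqrt t + 1) / 2"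
definition "fD (t::real) = (t - 1)^2 / (t + 1)"
definition "fP (t::real) = (t - 1)^2 * (t + 1) / t"
definition "fJ (t::real) = (t - 1) * ln t"
definition "fI (t::real) = (t * ln t - (t + 1) * ln ((t + 1) / 2)) / 2"
definition "fT (t::real) = (t + 1) / 2 * ln ((t + 1) / 2) - (t + 1) / 4 * ln t"

definition "fh1 (t::real) = 1/2 - 1 / (2 * sqrt t)"
definition "fD1 (t::real) = 1 - 4 / (t + 1)^2"
definition "fP1 (t::real) = 2 * t - 1 - 1 / t^2"
definition "fJ1 (t::real) = ln t + 1 - 1 / t"
definition "fI1 (t::real) = (ln t - ln ((t + 1) / 2)) / 2"
definition "fT1 (t::real) = ln ((t + 1) / 2) / 2 + 1/2 - ln t / 4 - (t + 1) / (4 * t)"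

definition "fh2 (t::real) = 1 / (4 * t * sqrt t)"
definition "fD2 (t::real) = 8 / (t + 1)^3"
definition "fP2 (t::real) = 2 + 2 / t^3"
definition "fJ2 (t::real) = 1 / t + 1 / t^2"
definition "fI2 (t::real) = 1 / (2 * t * (t + 1))"
definition "fT2 (t::real) = (t^2 + 1) / (4 * t^2 * (t + 1))"

lemma dh: assumes "t > 0" shows "(fh has_real_derivative fh1 t) (at t)"
proof -
  have p: "t + 1 > 0" "1 + t > 0" "t \<noteq> 0" "t + 1 \<noteq> 0" "1 + t \<noteq> 0" "sqrt t > 0" using assms by auto
  show ?thesis unfolding fh_def[abs_def] fh1_def
    apply (auto intro!: derivative_eq_intros)
    using p apply (simp_all add: divide_simps)
    apply (algebra)?
    done
qed
lemma dD: assumes "t > 0" shows "(fD has_real_derivative fD1 t) (at t)"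
proof -
  have p: "t + 1 > 0" "1 + t > 0" "t \<noteq> 0" "t + 1 \<noteq> 0" "1 + t \<noteq> 0" "sqrt t > 0" using assms by auto
  show ?thesis unfolding fD_def[abs_def] fD1_def
    apply (auto intro!: derivative_eq_intros)
    using p apply (simp_all add: divide_simps)
    apply (algebra)?
    done
qed
lemma dP: assumes "t > 0" shows "(fP has_real_derivative fP1 t) (at t)"
proof -
  have p: "t + 1 > 0" "1 + t > 0" "t \<noteq> 0" "t + 1 \<noteq> 0" "1 + t \<noteq> 0" "sqrt t > 0" using assms by auto
  show ?thesis unfolding fP_def[abs_def] fP1_def
    apply (auto intro!: derivative_eq_intros)
    using p apply (simp_all add: divide_simps)
    apply (algebra)?
    done
qed
lemma dJ: assumes "t > 0" shows "(fJ has_real_derivative fJ1 t) (at t)"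
proof -
  have p: "t + 1 > 0" "1 + t > 0" "t \<noteq> 0" "t + 1 \<noteq> 0" "1 + t \<noteq> 0" "sqrt t > 0" using assms by auto
  show ?thesis unfolding fJ_def[abs_def] fJ1_def
    apply (auto intro!: derivative_eq_intros)
    using p apply (simp_all add: divide_simps)
    apply (algebra)?
    done
qed
lemma dI: assumes "t > 0" shows "(fI has_real_derivative fI1 t) (at t)"
proof -
  have p: "t + 1 > 0" "1 + t > 0" "t \<noteq> 0" "t + 1 \<noteq> 0" "1 + t \<noteq> 0" "sqrt t > 0" using assms by auto
  show ?thesis unfolding fI_def[abs_def] fI1_def
    apply (auto intro!: derivative_eq_intros)
    using p apply (simp_all add: divide_simps)
    apply (algebra)?
    done
qed
lemma dT: assumes "t > 0" shows "(fT has_real_derivative fT1 t) (at t)"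
proof -
  have p: "t + 1 > 0" "1 + t > 0" "t \<noteq> 0" "t + 1 \<noteq> 0" "1 + t \<noteq> 0" "sqrt t > 0" using assms by auto
  show ?thesis unfolding fT_def[abs_def] fT1_def
    apply (auto intro!: derivative_eq_intros)
    using p apply (simp_all add: divide_simps)
    apply (algebra)?
    done
qed

lemma dh1: assumes "t > 0" shows "(fh1 has_real_derivative fh2 t) (at t)"
proof -
  have p: "t + 1 > 0" "1 + t > 0" "t \<noteq> 0" "t + 1 \<noteq> 0" "1 + t \<noteq> 0" "sqrt t > 0" using assms by auto
  show ?thesis unfolding fh1_def[abs_def] fh2_def
    apply (auto intro!: derivative_eq_intros)
    using p apply (simp_all add: divide_simps)
    apply (algebra)?
    done
qed
lemma dD1: assumes "t > 0" shows "(fD1 has_real_derivative fD2 t) (at t)"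
proof -
  have p: "t + 1 > 0" "1 + t > 0" "t \<noteq> 0" "t + 1 \<noteq> 0" "1 + t \<noteq> 0" "sqrt t > 0" using assms by auto
  show ?thesis unfolding fD1_def[abs_def] fD2_def
    apply (auto intro!: derivative_eq_intros)
    using p apply (simp_all add: divide_simps)
    apply (algebra)?
    done
qed
lemma dP1: assumes "t > 0" shows "(fP1 has_real_derivative fP2 t) (at t)"
proof -
  have p: "t + 1 > 0" "1 + t > 0" "t \<noteq> 0" "t + 1 \<noteq> 0" "1 + t \<noteq> 0" "sqrt t > 0" using assms by auto
  show ?thesis unfolding fP1_def[abs_def] fP2_def
    apply (auto intro!: derivative_eq_intros)
    using p apply (simp_all add: divide_simps)
    apply (algebra)?
    done
qed
lemma dJ1: assumes "t > 0" shows "(fJ1 has_real_derivative fJ2 t) (at t)"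
proof -
  have p: "t + 1 > 0" "1 + t > 0" "t \<noteq> 0" "t + 1 \<noteq> 0" "1 + t \<noteq> 0" "sqrt t > 0" using assms by auto
  show ?thesis unfolding fJ1_def[abs_def] fJ2_def
    apply (auto intro!: derivative_eq_intros)
    using p apply (simp_all add: divide_simps)
    apply (algebra)?
    done
qed
lemma dI1: assumes "t > 0" shows "(fI1 has_real_derivative fI2 t) (at t)"
proof -
  have p: "t + 1 > 0" "1 + t > 0" "t \<noteq> 0" "t + 1 \<noteq> 0" "1 + t \<noteq> 0" "sqrt t > 0" using assms by auto
  show ?thesis unfolding fI1_def[abs_def] fI2_def
    apply (auto intro!: derivative_eq_intros)
    using p apply (simp_all add: divide_simps)
    apply (algebra)?
    done
qed
lemma dT1: assumes "t > 0" shows "(fT1 has_real_derivative fT2 t) (at t)"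
proof -
  have p: "t + 1 > 0" "1 + t > 0" "t \<noteq> 0" "t + 1 \<noteq> 0" "1 + t \<noteq> 0" "sqrt t > 0" using assms by auto
  show ?thesis unfolding fT1_def[abs_def] fT2_def
    apply (auto intro!: derivative_eq_intros)
    using p apply (simp_all add: divide_simps)
    apply (algebra)?
    done
qed


lemma conv_nonneg:
  fixes g g1 g2 :: "real \<Rightarrow> real"
  assumes d1: "\<And>t. t > 0 \<Longrightarrow> (g has_real_derivative g1 t) (at t)"
    and d2: "\<And>t. t > 0 \<Longrightarrow> (g1 has_real_derivative g2 t) (at t)"
    and pos: "\<And>t. t > 0 \<Longrightarrow> 0 \<le> g2 t"
    and z0: "g 1 = 0" and z1: "g1 1 = 0" and t: "t > 0"
  shows "0 \<le> g t"
proof -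
  have mono: "g1 x \<le> g1 y" if "0 < x" "x \<le> y" for x y
    using that by (intro DERIV_nonneg_imp_nondecreasing[of x y g1]) (auto intro!: exI[of _ "g2 _"] d2 pos)
  show ?thesis
  proof (cases "t \<ge> 1")
    case True
    have "g 1 \<le> g t"
    proof (rule DERIV_nonneg_imp_nondecreasing[OF True])
      fix x assume "1 \<le> x" "x \<le> t"
      then show "\<exists>y. DERIV g x :> y \<and> y \<ge> 0"
        using mono[of 1 x] z1 by (intro exI[of _ "g1 x"]) (auto intro!: d1)
    qed
    then show ?thesis using z0 by simp
  next
    case False
    have "g 1 \<le> g t"
    proof (rule deriv_nonpos_imp_antimono[of t 1 g g1])
      fix x assume "x \<in> {t..1}"
      then show "(g has_real_derivative g1 x) (at x)" using t by (auto intro!: d1)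
      show "g1 x \<le> 0" using mono[of x 1] z1 t \<open>x \<in> {t..1}\<close> by auto
    qed (use False in auto)
    then show ?thesis using z0 by simp
  qed
qed

lemma key:
  fixes a b c d e k t :: real
  assumes H: "\<And>t. t > 0 \<Longrightarrow> 0 \<le> a*fh2 t + b*fD2 t + c*fP2 t + d*fJ2 t + e*fI2 t + k*fT2 t"
    and t: "t > 0"
  shows "0 \<le> a*fh t + b*fD t + c*fP t + d*fJ t + e*fI t + k*fT t"
proof (rule conv_nonneg[of "\<lambda>t. a*fh t + b*fD t + c*fP t + d*fJ t + e*fI t + k*fT t"
      "\<lambda>t. a*fh1 t + b*fD1 t + c*fP1 t + d*fJ1 t + e*fI1 t + k*fT1 t"
      "\<lambda>t. a*fh2 t + b*fD2 t + c*fP2 t + d*fJ2 t + e*fI2 t + k*fT2 t", OF _ _ H _ _ t])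
  fix x :: real assume x: "x > 0"
  show "((\<lambda>t. a*fh t + b*fD t + c*fP t + d*fJ t + e*fI t + k*fT t) has_real_derivative
     a*fh1 x + b*fD1 x + c*fP1 x + d*fJ1 x + e*fI1 x + k*fT1 x) (at x)"
    using x by (intro DERIV_add DERIV_cmult dh dD dP dJ dI dT)
  show "((\<lambda>t. a*fh1 t + b*fD1 t + c*fP1 t + d*fJ1 t + e*fI1 t + k*fT1 t) has_real_derivative
     a*fh2 x + b*fD2 x + c*fP2 x + d*fJ2 x + e*fI2 x + k*fT2 x) (at x)"
    using x by (intro DERIV_add DERIV_cmult dh1 dD1 dP1 dJ1 dI1 dT1)
qed (auto simp: fh_def fD_def fP_def fJ_def fI_def fT_def fh1_def fD1_def fP1_def fJ1_def fI1_def fT1_def)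

lemma eh: "p > 0 \<Longrightarrow> q > 0 \<Longrightarrow> 1/2 * (sqrt p - sqrt q)^2 = q * fh (p/q)"
proof -
  assume p: "p > 0" and q: "q > 0"
  have "sqrt q * sqrt q = q" using q by simp
  then show ?thesis using p q unfolding fh_def
    by (simp add: real_sqrt_divide power2_eq_square field_simps)
qed
lemma eD: "p > 0 \<Longrightarrow> q > 0 \<Longrightarrow> (p - q)^2 / (p + q) = q * fD (p/q)"
proof -
  assume p: "p > 0" and q: "q > 0"
  have a: "p/q - 1 = (p-q)/q" "p/q + 1 = (p+q)/q" using q by (simp_all add: field_simps)
  have b: "((p - q) / q)\<^sup>2 / ((p + q) / q) = (p-q)^2 / (q * (p+q))"
    using p q apply (simp add: power2_eq_square divide_simps)
    apply algebra?
    done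
  show ?thesis unfolding fD_def a b using p q by simp
qed
lemma eP: "p > 0 \<Longrightarrow> q > 0 \<Longrightarrow> (p - q)^2 * (p + q) / (p * q) = q * fP (p/q)"
proof -
  assume p: "p > 0" and q: "q > 0"
  have a: "p/q - 1 = (p-q)/q" "p/q + 1 = (p+q)/q" using q by (simp_all add: field_simps)
  show ?thesis unfolding fP_def a using p q by (simp add: power_divide power2_eq_square field_simps)
qed
lemma eJ: "p > 0 \<Longrightarrow> q > 0 \<Longrightarrow> (p - q) * ln (p / q) = q * fJ (p/q)"
  unfolding fJ_def by (simp add: field_simps)
lemma eI: "p > 0 \<Longrightarrow> q > 0 \<Longrightarrow>
  1/2 * (p * ln (2 * p / (p + q)) + q * ln (2 * q / (p + q))) = q * fI (p/q)"
proof -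
  assume p: "p > 0" and q: "q > 0"
  have "2 * p / (p + q) = p / ((p+q)/2)" "2 * q / (p + q) = q / ((p+q)/2)" by (simp_all add: field_simps)
  then have 1: "ln (2 * p / (p + q)) = ln p - ln ((p+q)/2)"
    and 2: "ln (2 * q / (p + q)) = ln q - ln ((p+q)/2)" using p q by (simp_all add: ln_div ln_mult)
  have 3: "ln (p/q) = ln p - ln q" using p q by (simp add: ln_div)
  have 4: "ln ((p/q + 1)/2) = ln ((p+q)/2) - ln q"
  proof -
    have "ln ((p/q + 1)/2) = ln (((p+q)/2) / q)"
      by (rule arg_cong[where f=ln]) (use q in \<open>simp add: field_simps\<close>)
    also have "\<dots> = ln ((p+q)/2) - ln q" by (rule ln_divide_pos) (use p q in auto)
    finally show ?thesis .
  qed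
  show ?thesis unfolding fI_def 1 2 3 4 using q by (simp add: field_simps)
qed
lemma eT: "p > 0 \<Longrightarrow> q > 0 \<Longrightarrow>
  (p + q) / 2 * ln ((p + q) / (2 * sqrt (p * q))) = q * fT (p/q)"
proof -
  assume p: "p > 0" and q: "q > 0"
  have 1: "ln ((p + q) / (2 * sqrt (p * q))) = ln ((p+q)/2) - (ln p + ln q)/2"
    using p q by (simp add: ln_div ln_mult ln_sqrt real_sqrt_mult) (simp add: field_simps)
  have 3: "ln (p/q) = ln p - ln q" using p q by (simp add: ln_div)
  have 4: "ln ((p/q + 1)/2) = ln ((p+q)/2) - ln q"
  proof -
    have "ln ((p/q + 1)/2) = ln (((p+q)/2) / q)"
      by (rule arg_cong[where f=ln]) (use q in \<open>simp add: field_simps\<close>)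
    also have "\<dots> = ln ((p+q)/2) - ln q" by (rule ln_divide_pos) (use p q in auto)
    finally show ?thesis .
  qed
  show ?thesis unfolding fT_def 1 3 4 using q by (simp add: field_simps)
qed

lemma g1: assumes t: "t > 0" shows "0 \<le> (2/3) * fh2 t + (1/12) * fD2 t + (0) * fP2 t + (0) * fJ2 t + (-1) * fI2 t + (0) * fT2 t"
proof -
  define s where "s = sqrt t"
  have s: "s > 0" "t = s^2" "sqrt t = s" "s^2 + 1 \<noteq> 0" using t by (auto simp: s_def add_pos_nonneg)
  have e: "(2/3) * fh2 t + (1/12) * fD2 t + (0) * fP2 t + (0) * fJ2 t + (-1) * fI2 t + (0) * fT2 t = (s - 1)^4 * s^3 * ((1/6) * s^0 + (1/6) * s^1 + (1/6) * s^2) / (s^6 * (s^2 + 1)^3)"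
    unfolding fh2_def fD2_def fP2_def fJ2_def fI2_def fT2_def s(3) unfolding s(2) using s(1)
    apply (simp add: divide_simps s(4))
    apply algebra?
    done
  have "0 \<le> (1/6) * s^0 + (1/6) * s^1 + (1/6) * s^2" using s(1) by (intro add_nonneg_nonneg mult_nonneg_nonneg) auto
  then show ?thesis unfolding e using s(1) by simp
qed

lemma g2: assumes t: "t > 0" shows "0 \<le> (4/3) * fh2 t + (1/6) * fD2 t + (0) * fP2 t + (0) * fJ2 t + (-2) * fI2 t + (0) * fT2 t"
proof -
  define s where "s = sqrt t"
  have s: "s > 0" "t = s^2" "sqrt t = s" "s^2 + 1 \<noteq> 0" using t by (auto simp: s_def add_pos_nonneg)
  have e: "(4/3) * fh2 t + (1/6) * fD2 t + (0) * fP2 t + (0) * fJ2 t + (-2) * fI2 t + (0) * fT2 t = (s - 1)^4 * s^3 * ((1/3) * s^0 + (1/3) * s^1 + (1/3) * s^2) / (s^6 * (s^2 + 1)^3)"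
    unfolding fh2_def fD2_def fP2_def fJ2_def fI2_def fT2_def s(3) unfolding s(2) using s(1)
    apply (simp add: divide_simps s(4))
    apply algebra?
    done
  have "0 \<le> (1/3) * s^0 + (1/3) * s^1 + (1/3) * s^2" using s(1) by (intro add_nonneg_nonneg mult_nonneg_nonneg) auto
  then show ?thesis unfolding e using s(1) by simp
qed

lemma g3: assumes t: "t > 0" shows "0 \<le> (-2) * fh2 t + (0) * fD2 t + (0) * fP2 t + (-1/8) * fJ2 t + (2) * fI2 t + (1) * fT2 t"
proof -
  define s where "s = sqrt t"
  have s: "s > 0" "t = s^2" "sqrt t = s" "s^2 + 1 > 0" using t by (auto simp: s_def add_pos_nonneg)
  have h: "fh2 t = 1/(4*s^3)" unfolding fh2_def s(3) unfolding s(2) by (simp add: power3_eq_cube power2_eq_square)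
  have J: "fJ2 t = (s^2+1)/s^4" unfolding fJ2_def s(2) using s(1) by (simp add: field_simps eval_nat_numeral)
  have I: "fI2 t = 1/(2*s^2*(s^2+1))" unfolding fI2_def s(2) by simp
  have T: "fT2 t = (s^4+1)/(4*s^4*(s^2+1))" unfolding fT2_def s(2) by (simp add: eval_nat_numeral mult_ac)
  have e: "(-2) * fh2 t + (0) * fD2 t + (0) * fP2 t + (-1/8) * fJ2 t + (2) * fI2 t + (1) * fT2 t = (s - 1)^4 / (8 * s^4 * (s^2 + 1))"
    unfolding h J I T using s(1) s(4)
    apply (simp add: divide_simps)
    apply algebra?
    done
  show ?thesis unfolding e using s(1) by simp
qed

lemma g4: assumes t: "t > 0" shows "0 \<le> (-2/3) * fh2 t + (1/24) * fD2 t + (0) * fP2 t + (1/16) * fJ2 t + (0) * fI2 t + (0) * fT2 t"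
proof -
  define s where "s = sqrt t"
  have s: "s > 0" "t = s^2" "sqrt t = s" "s^2 + 1 \<noteq> 0" using t by (auto simp: s_def add_pos_nonneg)
  have e: "(-2/3) * fh2 t + (1/24) * fD2 t + (0) * fP2 t + (1/16) * fJ2 t + (0) * fI2 t + (0) * fT2 t = (s - 1)^4 * s^2 * ((1/16) * s^0 + (1/12) * s^1 + (5/24) * s^2 + (1/12) * s^3 + (1/16) * s^4) / (s^6 * (s^2 + 1)^3)"
    unfolding fh2_def fD2_def fP2_def fJ2_def fI2_def fT2_def s(3) unfolding s(2) using s(1)
    apply (simp add: divide_simps s(4))
    apply algebra?
    done
  have "0 \<le> (1/16) * s^0 + (1/12) * s^1 + (5/24) * s^2 + (1/12) * s^3 + (1/16) * s^4" using s(1) by (intro add_nonneg_nonneg mult_nonneg_nonneg) auto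
  then show ?thesis unfolding e using s(1) by simp
qed

lemma g5: assumes t: "t > 0" shows "0 \<le> (0) * fh2 t + (1/24) * fD2 t + (0) * fP2 t + (-1/16) * fJ2 t + (0) * fI2 t + (1/3) * fT2 t"
proof -
  define s where "s = sqrt t"
  have s: "s > 0" "t = s^2" "sqrt t = s" "s^2 + 1 \<noteq> 0" using t by (auto simp: s_def add_pos_nonneg)
  have e: "(0) * fh2 t + (1/24) * fD2 t + (0) * fP2 t + (-1/16) * fJ2 t + (0) * fI2 t + (1/3) * fT2 t = (s - 1)^4 * s^2 * ((1/48) * s^0 + (1/12) * s^1 + (1/8) * s^2 + (1/12) * s^3 + (1/48) * s^4) / (s^6 * (s^2 + 1)^3)"
    unfolding fh2_def fD2_def fP2_def fJ2_def fI2_def fT2_def s(3) unfolding s(2) using s(1)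
    apply (simp add: divide_simps s(4))
    apply algebra?
    done
  have "0 \<le> (1/48) * s^0 + (1/12) * s^1 + (1/8) * s^2 + (1/12) * s^3 + (1/48) * s^4" using s(1) by (intro add_nonneg_nonneg mult_nonneg_nonneg) auto
  then show ?thesis unfolding e using s(1) by simp
qed

lemma g6: assumes t: "t > 0" shows "0 \<le> (0) * fh2 t + (1/12) * fD2 t + (0) * fP2 t + (-1/8) * fJ2 t + (0) * fI2 t + (2/3) * fT2 t"
proof -
  define s where "s = sqrt t"
  have s: "s > 0" "t = s^2" "sqrt t = s" "s^2 + 1 \<noteq> 0" using t by (auto simp: s_def add_pos_nonneg)
  have e: "(0) * fh2 t + (1/12) * fD2 t + (0) * fP2 t + (-1/8) * fJ2 t + (0) * fI2 t + (2/3) * fT2 t = (s - 1)^4 * s^2 * ((1/24) * s^0 + (1/6) * s^1 + (1/4) * s^2 + (1/6) * s^3 + (1/24) * s^4) / (s^6 * (s^2 + 1)^3)"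
    unfolding fh2_def fD2_def fP2_def fJ2_def fI2_def fT2_def s(3) unfolding s(2) using s(1)
    apply (simp add: divide_simps s(4))
    apply algebra?
    done
  have "0 \<le> (1/24) * s^0 + (1/6) * s^1 + (1/4) * s^2 + (1/6) * s^3 + (1/24) * s^4" using s(1) by (intro add_nonneg_nonneg mult_nonneg_nonneg) auto
  then show ?thesis unfolding e using s(1) by simp
qed

lemma g7: assumes t: "t > 0" shows "0 \<le> (-2/3) * fh2 t + (0) * fD2 t + (0) * fP2 t + (1/8) * fJ2 t + (0) * fI2 t + (-1/3) * fT2 t"
proof -
  define s where "s = sqrt t"
  have s: "s > 0" "t = s^2" "sqrt t = s" "s^2 + 1 \<noteq> 0" using t by (auto simp: s_def add_pos_nonneg)
  have e: "(-2/3) * fh2 t + (0) * fD2 t + (0) * fP2 t + (1/8) * fJ2 t + (0) * fI2 t + (-1/3) * fT2 t = (s - 1)^4 * s^2 * ((1/24) * s^0 + (1/12) * s^2 + (1/24) * s^4) / (s^6 * (s^2 + 1)^3)"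
    unfolding fh2_def fD2_def fP2_def fJ2_def fI2_def fT2_def s(3) unfolding s(2) using s(1)
    apply (simp add: divide_simps s(4))
    apply algebra?
    done
  have "0 \<le> (1/24) * s^0 + (1/12) * s^2 + (1/24) * s^4" using s(1) by (intro add_nonneg_nonneg mult_nonneg_nonneg) auto
  then show ?thesis unfolding e using s(1) by simp
qed

lemma g8: assumes t: "t > 0" shows "0 \<le> (-4/3) * fh2 t + (0) * fD2 t + (0) * fP2 t + (1/4) * fJ2 t + (0) * fI2 t + (-2/3) * fT2 t"
proof -
  define s where "s = sqrt t"
  have s: "s > 0" "t = s^2" "sqrt t = s" "s^2 + 1 \<noteq> 0" using t by (auto simp: s_def add_pos_nonneg)
  have e: "(-4/3) * fh2 t + (0) * fD2 t + (0) * fP2 t + (1/4) * fJ2 t + (0) * fI2 t + (-2/3) * fT2 t = (s - 1)^4 * s^2 * ((1/12) * s^0 + (1/6) * s^2 + (1/12) * s^4) / (s^6 * (s^2 + 1)^3)"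
    unfolding fh2_def fD2_def fP2_def fJ2_def fI2_def fT2_def s(3) unfolding s(2) using s(1)
    apply (simp add: divide_simps s(4))
    apply algebra?
    done
  have "0 \<le> (1/12) * s^0 + (1/6) * s^2 + (1/12) * s^4" using s(1) by (intro add_nonneg_nonneg mult_nonneg_nonneg) auto
  then show ?thesis unfolding e using s(1) by simp
qed

lemma g9: assumes t: "t > 0" shows "0 \<le> (2) * fh2 t + (-1/24) * fD2 t + (1/96) * fP2 t + (-1/4) * fJ2 t + (0) * fI2 t + (0) * fT2 t"
proof -
  define s where "s = sqrt t"
  have s: "s > 0" "t = s^2" "sqrt t = s" "s^2 + 1 \<noteq> 0" using t by (auto simp: s_def add_pos_nonneg)
  have e: "(2) * fh2 t + (-1/24) * fD2 t + (1/96) * fP2 t + (-1/4) * fJ2 t + (0) * fI2 t + (0) * fT2 t = (s - 1)^4 * s^0 * ((1/48) * s^0 + (1/12) * s^1 + (1/48) * s^2 + (1/12) * (s^3 * (s - 1)^2) + (1/12) * s^3 + (1/12) * s^4 + (1/12) * s^5 + (1/48) * s^6 + (1/12) * s^7 + (1/48) * s^8) / (s^6 * (s^2 + 1)^3)"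
    unfolding fh2_def fD2_def fP2_def fJ2_def fI2_def fT2_def s(3) unfolding s(2) using s(1)
    apply (simp add: divide_simps s(4))
    apply algebra?
    done
  have "0 \<le> (1/48) * s^0 + (1/12) * s^1 + (1/48) * s^2 + (1/12) * (s^3 * (s - 1)^2) + (1/12) * s^3 + (1/12) * s^4 + (1/12) * s^5 + (1/48) * s^6 + (1/12) * s^7 + (1/48) * s^8" using s(1) by (intro add_nonneg_nonneg mult_nonneg_nonneg) auto
  then show ?thesis unfolding e using s(1) by simp
qed

lemma g10: assumes t: "t > 0" shows "0 \<le> (0) * fh2 t + (1/24) * fD2 t + (1/480) * fP2 t + (0) * fJ2 t + (-1/5) * fI2 t + (0) * fT2 t"
proof -
  define s where "s = sqrt t"
  have s: "s > 0" "t = s^2" "sqrt t = s" "s^2 + 1 \<noteq> 0" using t by (auto simp: s_def add_pos_nonneg)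
  have e: "(0) * fh2 t + (1/24) * fD2 t + (1/480) * fP2 t + (0) * fJ2 t + (-1/5) * fI2 t + (0) * fT2 t = (s - 1)^4 * s^0 * ((1/240) * s^0 + (1/60) * s^1 + (13/240) * s^2 + (2/15) * s^3 + (11/60) * s^4 + (2/15) * s^5 + (13/240) * s^6 + (1/60) * s^7 + (1/240) * s^8) / (s^6 * (s^2 + 1)^3)"
    unfolding fh2_def fD2_def fP2_def fJ2_def fI2_def fT2_def s(3) unfolding s(2) using s(1)
    apply (simp add: divide_simps s(4))
    apply algebra?
    done
  have "0 \<le> (1/240) * s^0 + (1/60) * s^1 + (13/240) * s^2 + (2/15) * s^3 + (11/60) * s^4 + (2/15) * s^5 + (13/240) * s^6 + (1/60) * s^7 + (1/240) * s^8" using s(1) by (intro add_nonneg_nonneg mult_nonneg_nonneg) auto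
  then show ?thesis unfolding e using s(1) by simp
qed

lemma g11: assumes t: "t > 0" shows "0 \<le> (-2/9) * fh2 t + (0) * fD2 t + (1/720) * fP2 t + (0) * fJ2 t + (1/5) * fI2 t + (0) * fT2 t"
proof -
  define s where "s = sqrt t"
  have s: "s > 0" "t = s^2" "sqrt t = s" "s^2 + 1 \<noteq> 0" using t by (auto simp: s_def add_pos_nonneg)
  have e: "(-2/9) * fh2 t + (0) * fD2 t + (1/720) * fP2 t + (0) * fJ2 t + (1/5) * fI2 t + (0) * fT2 t = (s - 1)^4 * s^0 * ((1/360) * s^0 + (1/90) * s^1 + (13/360) * s^2 + (1/30) * s^3 + (1/15) * s^4 + (1/30) * s^5 + (13/360) * s^6 + (1/90) * s^7 + (1/360) * s^8) / (s^6 * (s^2 + 1)^3)"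
    unfolding fh2_def fD2_def fP2_def fJ2_def fI2_def fT2_def s(3) unfolding s(2) using s(1)
    apply (simp add: divide_simps s(4))
    apply algebra?
    done
  have "0 \<le> (1/360) * s^0 + (1/90) * s^1 + (13/360) * s^2 + (1/30) * s^3 + (1/15) * s^4 + (1/30) * s^5 + (13/360) * s^6 + (1/90) * s^7 + (1/360) * s^8" using s(1) by (intro add_nonneg_nonneg mult_nonneg_nonneg) auto
  then show ?thesis unfolding e using s(1) by simp
qed

lemma g12: assumes t: "t > 0" shows "0 \<le> (2/9) * fh2 t + (0) * fD2 t + (1/576) * fP2 t + (-1/32) * fJ2 t + (0) * fI2 t + (0) * fT2 t"
proof -
  define s where "s = sqrt t"
  have s: "s > 0" "t = s^2" "sqrt t = s" "s^2 + 1 \<noteq> 0" using t by (auto simp: s_def add_pos_nonneg)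
  have e: "(2/9) * fh2 t + (0) * fD2 t + (1/576) * fP2 t + (-1/32) * fJ2 t + (0) * fI2 t + (0) * fT2 t = (s - 1)^4 * s^0 * ((1/288) * s^0 + (1/72) * s^1 + (1/72) * s^2 + (1/24) * s^3 + (1/48) * s^4 + (1/24) * s^5 + (1/72) * s^6 + (1/72) * s^7 + (1/288) * s^8) / (s^6 * (s^2 + 1)^3)"
    unfolding fh2_def fD2_def fP2_def fJ2_def fI2_def fT2_def s(3) unfolding s(2) using s(1)
    apply (simp add: divide_simps s(4))
    apply algebra?
    done
  have "0 \<le> (1/288) * s^0 + (1/72) * s^1 + (1/72) * s^2 + (1/24) * s^3 + (1/48) * s^4 + (1/24) * s^5 + (1/72) * s^6 + (1/72) * s^7 + (1/288) * s^8" using s(1) by (intro add_nonneg_nonneg mult_nonneg_nonneg) auto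
  then show ?thesis unfolding e using s(1) by simp
qed

lemma g13: assumes t: "t > 0" shows "0 \<le> (0) * fh2 t + (0) * fD2 t + (1/192) * fP2 t + (1/32) * fJ2 t + (0) * fI2 t + (-1/3) * fT2 t"
proof -
  define s where "s = sqrt t"
  have s: "s > 0" "t = s^2" "sqrt t = s" "s^2 + 1 \<noteq> 0" using t by (auto simp: s_def add_pos_nonneg)
  have e: "(0) * fh2 t + (0) * fD2 t + (1/192) * fP2 t + (1/32) * fJ2 t + (0) * fI2 t + (-1/3) * fT2 t = (s - 1)^4 * s^0 * ((1/96) * s^0 + (1/24) * s^1 + (1/12) * s^2 + (1/8) * s^3 + (7/48) * s^4 + (1/8) * s^5 + (1/12) * s^6 + (1/24) * s^7 + (1/96) * s^8) / (s^6 * (s^2 + 1)^3)"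
    unfolding fh2_def fD2_def fP2_def fJ2_def fI2_def fT2_def s(3) unfolding s(2) using s(1)
    apply (simp add: divide_simps s(4))
    apply algebra?
    done
  have "0 \<le> (1/96) * s^0 + (1/24) * s^1 + (1/12) * s^2 + (1/8) * s^3 + (7/48) * s^4 + (1/8) * s^5 + (1/12) * s^6 + (1/24) * s^7 + (1/96) * s^8" using s(1) by (intro add_nonneg_nonneg mult_nonneg_nonneg) auto
  then show ?thesis unfolding e using s(1) by simp
qed

lemma sum_key:
  fixes a b c d e k :: real
  assumes H: "\<And>t. t > 0 \<Longrightarrow> 0 \<le> a*fh2 t + b*fD2 t + c*fP2 t + d*fJ2 t + e*fI2 t + k*fT2 t"
    and P: "\<And>i. i < n \<Longrightarrow> P i > 0" and Q: "\<And>i. i < n \<Longrightarrow> Q i > 0"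
  shows "0 \<le> a * hell n P Q + b * Delta n P Q + c * Psi n P Q + d * Jdiv n P Q + e * Idiv n P Q + k * Tdiv n P Q"
proof -
  have h: "hell n P Q = (\<Sum>i<n. Q i * fh (P i / Q i))"
    unfolding hell_def sum_distrib_left by (rule sum.cong[OF refl], rule eh) (auto intro: P Q)
  have D: "Delta n P Q = (\<Sum>i<n. Q i * fD (P i / Q i))"
    unfolding Delta_def by (rule sum.cong[OF refl], rule eD) (auto intro: P Q)
  have Ps: "Psi n P Q = (\<Sum>i<n. Q i * fP (P i / Q i))"
    unfolding Psi_def by (rule sum.cong[OF refl], rule eP) (auto intro: P Q)
  have J: "Jdiv n P Q = (\<Sum>i<n. Q i * fJ (P i / Q i))"
    unfolding Jdiv_def by (rule sum.cong[OF refl], rule eJ) (auto intro: P Q)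
  have I: "Idiv n P Q = (\<Sum>i<n. Q i * fI (P i / Q i))"
    unfolding Idiv_def sum.distrib[symmetric] sum_distrib_left by (rule sum.cong[OF refl], rule eI) (auto intro: P Q)
  have T: "Tdiv n P Q = (\<Sum>i<n. Q i * fT (P i / Q i))"
    unfolding Tdiv_def by (rule sum.cong[OF refl], rule eT) (auto intro: P Q)
  have "0 \<le> (\<Sum>i<n. Q i * (a*fh (P i / Q i) + b*fD (P i / Q i) + c*fP (P i / Q i) + d*fJ (P i / Q i) + e*fI (P i / Q i) + k*fT (P i / Q i)))"
    using P Q by (intro sum_nonneg mult_nonneg_nonneg key[OF H]) (auto intro: less_imp_le)
  also have "\<dots> = a * hell n P Q + b * Delta n P Q + c * Psi n P Q + d * Jdiv n P Q + e * Idiv n P Q + k * Tdiv n P Q"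
    unfolding h D Ps J I T by (simp add: sum_distrib_left sum.distrib distrib_left mult_ac)
  finally show ?thesis .
qed

theorem theorem5p1:
  fixes n :: nat and P Q :: "nat \<Rightarrow> real"
  assumes "n \<ge> 2" and "P \<in> Gamma n" and "Q \<in> Gamma n"
  shows "D_IDelta n P Q \<le> 2/3 * D_hDelta n P Q \<and>
         2/3 * D_hDelta n P Q \<le> 2 * D_hI n P Q \<and>
         2 * D_hI n P Q \<le> D_TJ n P Q \<and>
         2/3 * D_hDelta n P Q \<le> 1/2 * D_JDelta n P Q \<and>
         1/2 * D_JDelta n P Q \<le> 1/3 * D_TDelta n P Q \<and>
         1/3 * D_TDelta n P Q \<le> D_TJ n P Q \<and>
         D_TJ n P Q \<le> 2/3 * D_Th n P Q \<and>
         2/3 * D_Th n P Q \<le> 2 * D_Jh n P Q \<and>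
         2 * D_Jh n P Q \<le> 1/6 * D_PsiDelta n P Q \<and>
         1/6 * D_PsiDelta n P Q \<le> 1/5 * D_PsiI n P Q \<and>
         1/5 * D_PsiI n P Q \<le> 2/9 * D_Psih n P Q \<and>
         2/9 * D_Psih n P Q \<le> 1/4 * D_PsiJ n P Q \<and>
         1/4 * D_PsiJ n P Q \<le> 1/3 * D_PsiT n P Q"
proof -
  have P: "\<And>i. i < n \<Longrightarrow> P i > 0" and Q: "\<And>i. i < n \<Longrightarrow> Q i > 0"
    using assms(2,3) by (auto simp: Gamma_def)
  show ?thesis
    unfolding D_PsiT_def D_PsiJ_def D_Psih_def D_PsiI_def D_PsiDelta_def D_TJ_def D_Th_def
      D_TDelta_def D_Jh_def D_JDelta_def D_hI_def D_hDelta_def D_IDelta_def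
    apply (intro conjI)
    subgoal
    proof -
      have "0 \<le> (2/3) * hell n P Q + (1/12) * Delta n P Q + (0) * Psi n P Q + (0) * Jdiv n P Q + (-1) * Idiv n P Q + (0) * Tdiv n P Q"
        apply (rule sum_key)
          apply (erule g1)
         apply (erule P)
        apply (erule Q)
        done
      then show ?thesis by (simp add: field_simps)
    qed
    subgoal
    proof -
      have "0 \<le> (4/3) * hell n P Q + (1/6) * Delta n P Q + (0) * Psi n P Q + (0) * Jdiv n P Q + (-2) * Idiv n P Q + (0) * Tdiv n P Q"
        apply (rule sum_key)
          apply (erule g2)
         apply (erule P)
        apply (erule Q)
        done
      then show ?thesis by (simp add: field_simps)
    qed
    subgoal
    proof -
      have "0 \<le> (-2) * hell n P Q + (0) * Delta n P Q + (0) * Psi n P Q + (-1/8) * Jdiv n P Q + (2) * Idiv n P Q + (1) * Tdiv n P Q"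
        apply (rule sum_key)
          apply (erule g3)
         apply (erule P)
        apply (erule Q)
        done
      then show ?thesis by (simp add: field_simps)
    qed
    subgoal
    proof -
      have "0 \<le> (-2/3) * hell n P Q + (1/24) * Delta n P Q + (0) * Psi n P Q + (1/16) * Jdiv n P Q + (0) * Idiv n P Q + (0) * Tdiv n P Q"
        apply (rule sum_key)
          apply (erule g4)
         apply (erule P)
        apply (erule Q)
        done
      then show ?thesis by (simp add: field_simps)
    qed
    subgoal
    proof -
      have "0 \<le> (0) * hell n P Q + (1/24) * Delta n P Q + (0) * Psi n P Q + (-1/16) * Jdiv n P Q + (0) * Idiv n P Q + (1/3) * Tdiv n P Q"
        apply (rule sum_key)
          apply (erule g5)
         apply (erule P)
        apply (erule Q)
        done
      then show ?thesis by (simp add: field_simps)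
    qed
    subgoal
    proof -
      have "0 \<le> (0) * hell n P Q + (1/12) * Delta n P Q + (0) * Psi n P Q + (-1/8) * Jdiv n P Q + (0) * Idiv n P Q + (2/3) * Tdiv n P Q"
        apply (rule sum_key)
          apply (erule g6)
         apply (erule P)
        apply (erule Q)
        done
      then show ?thesis by (simp add: field_simps)
    qed
    subgoal
    proof -
      have "0 \<le> (-2/3) * hell n P Q + (0) * Delta n P Q + (0) * Psi n P Q + (1/8) * Jdiv n P Q + (0) * Idiv n P Q + (-1/3) * Tdiv n P Q"
        apply (rule sum_key)
          apply (erule g7)
         apply (erule P)
        apply (erule Q)
        done
      then show ?thesis by (simp add: field_simps)
    qed
    subgoal
    proof -
      have "0 \<le> (-4/3) * hell n P Q + (0) * Delta n P Q + (0) * Psi n P Q + (1/4) * Jdiv n P Q + (0) * Idiv n P Q + (-2/3) * Tdiv n P Q"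
        apply (rule sum_key)
          apply (erule g8)
         apply (erule P)
        apply (erule Q)
        done
      then show ?thesis by (simp add: field_simps)
    qed
    subgoal
    proof -
      have "0 \<le> (2) * hell n P Q + (-1/24) * Delta n P Q + (1/96) * Psi n P Q + (-1/4) * Jdiv n P Q + (0) * Idiv n P Q + (0) * Tdiv n P Q"
        apply (rule sum_key)
          apply (erule g9)
         apply (erule P)
        apply (erule Q)
        done
      then show ?thesis by (simp add: field_simps)
    qed
    subgoal
    proof -
      have "0 \<le> (0) * hell n P Q + (1/24) * Delta n P Q + (1/480) * Psi n P Q + (0) * Jdiv n P Q + (-1/5) * Idiv n P Q + (0) * Tdiv n P Q"
        apply (rule sum_key)
          apply (erule g10)
         apply (erule P)
        apply (erule Q)
        done
      then show ?thesis by (simp add: field_simps)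
    qed
    subgoal
    proof -
      have "0 \<le> (-2/9) * hell n P Q + (0) * Delta n P Q + (1/720) * Psi n P Q + (0) * Jdiv n P Q + (1/5) * Idiv n P Q + (0) * Tdiv n P Q"
        apply (rule sum_key)
          apply (erule g11)
         apply (erule P)
        apply (erule Q)
        done
      then show ?thesis by (simp add: field_simps)
    qed
    subgoal
    proof -
      have "0 \<le> (2/9) * hell n P Q + (0) * Delta n P Q + (1/576) * Psi n P Q + (-1/32) * Jdiv n P Q + (0) * Idiv n P Q + (0) * Tdiv n P Q"
        apply (rule sum_key)
          apply (erule g12)
         apply (erule P)
        apply (erule Q)
        done
      then show ?thesis by (simp add: field_simps)
    qed
    subgoal
    proof -
      have "0 \<le> (0) * hell n P Q + (0) * Delta n P Q + (1/192) * Psi n P Q + (1/32) * Jdiv n P Q + (0) * Idiv n P Q + (-1/3) * Tdiv n P Q"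
        apply (rule sum_key)
          apply (erule g13)
         apply (erule P)
        apply (erule Q)
        done
      then show ?thesis by (simp add: field_simps)
    qed
    done
qed

end
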